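(* Let $\mathcal{A}=(Q,\delta,I,F)$ be a complete Büchi automaton, let $p,q\in Q$ with $p\preceq_{\mathit{de}}q$, let $\alpha$ be an infinite word and let $\mathcal{G}_\alpha=(V,E)$ be the run DAG of $\mathcal{A}$ over $\alpha$. Then for all $i\ge0$, if $(p,i)\in V$ and $(q,i)\in V$, then $\mathrm{rank}_\alpha(p,i)\le\lceil\mathrm{rank}_\alpha(q,i)\rceil$.
   Context: A Büchi automaton is $\mathcal{A}=(Q,\delta,I,F)$ over a finite alphabet $\Sigma$, $\delta:Q\times\Sigma\to2^Q$, complete if $\delta(q,a)\ne\emptyset$ always; $n=|Q|$. A run from $q$ on $\alpha=\alpha_0\alpha_1\cdots$ is a state sequence $\rho$ with $\rho_0=q$, $\rho_{i+1}\in\delta(\rho_i,\alpha_i)$. Delayed simulation: in the game from $(p_0,r_0)$, in round $i$ Spoiler picks $p_i\xrightarrow{\alpha_i}p_{i+1}$ and Duplicator answers $r_i\xrightarrow{\alpha_i}r_{i+1}$; a Duplicator strategy is a map $\sigma$ with $\sigma(r,p\xrightarrow{a}p')\in\delta(r,a)$ (no lookahead). Duplicator wins if for all $i$, $p_i\in F$ implies $r_k\in F$ for some $k\ge i$. $p\preceq_{\mathit{de}}r$ iff Duplicator has a winning strategy from $(p,r)$. Run DAG: $\mathcal{G}_\alpha=(V,E)$ with $V\subseteq Q\times\omega$, $(q,i)\in V$ iff some run of $\mathcal{A}$ over $\alpha$ from an initial state has $\rho_i=q$, and $((q,i),(q',i'))\in E$ iff $i'=i+1$ and $q'\in\delta(q,\alpha_i)$.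 A vertex $(p,i)$ is accepting if $p\in F$; it is finite in a subgraph if only finitely many vertices are reachable from it there, and endangered if it cannot reach an accepting vertex there. Ranks: let $\mathcal{G}^0=\mathcal{G}_\alpha$, $j=0$; repeat until fixpoint or for at most $2n+1$ steps: assign rank $j$ to all finite vertices of $\mathcal{G}^j$ and let $\mathcal{G}^{j+1}$ be $\mathcal{G}^j$ without them; assign rank $j+1$ to all endangered vertices of $\mathcal{G}^{j+1}$ and let $\mathcal{G}^{j+2}$ be $\mathcal{G}^{j+1}$ without them; set $j:=j+2$. Vertices never assigned a rank get rank $\omega$. $\mathrm{rank}_\alpha(v)$ denotes the rank of $v$. For $x\in\omega$, $\lceil x\rceil$ is the smallest even number $\ge x$, and $\lceil\omega\rceil=\omega$. *)

theory Defs
  imports Main "HOL-Library.Extended_Nat"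
begin

definition buchi_automaton ::
  "'q set \<Rightarrow> 'a set \<Rightarrow> ('q \<Rightarrow> 'a \<Rightarrow> 'q set) \<Rightarrow> 'q set \<Rightarrow> 'q set \<Rightarrow> bool" where
  "buchi_automaton Q \<Sigma> \<delta> I F \<longleftrightarrow>
     finite Q \<and> finite \<Sigma> \<and> I \<subseteq> Q \<and> F \<subseteq> Q \<and>
     (\<forall>q\<in>Q. \<forall>a\<in>\<Sigma>. \<delta> q a \<subseteq> Q)"

definition complete_aut :: "'q set \<Rightarrow> 'a set \<Rightarrow> ('q \<Rightarrow> 'a \<Rightarrow> 'q set) \<Rightarrow> bool" where
  "complete_aut Q \<Sigma> \<delta> \<longleftrightarrow> (\<forall>q\<in>Q. \<forall>a\<in>\<Sigma>. \<delta> q a \<noteq> {})"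

definition word :: "'a set \<Rightarrow> (nat \<Rightarrow> 'a) \<Rightarrow> bool" where
  "word \<Sigma> \<alpha> \<longleftrightarrow> (\<forall>i. \<alpha> i \<in> \<Sigma>)"

definition is_run :: "('q \<Rightarrow> 'a \<Rightarrow> 'q set) \<Rightarrow> 'q \<Rightarrow> (nat \<Rightarrow> 'a) \<Rightarrow> (nat \<Rightarrow> 'q) \<Rightarrow> bool" where
  "is_run \<delta> q \<alpha> \<rho> \<longleftrightarrow> \<rho> 0 = q \<and> (\<forall>i. \<rho> (Suc i) \<in> \<delta> (\<rho> i) (\<alpha> i))"

text \<open>Duplicator's states in the play determined by strategy sigma (a map from the
current Duplicator state and Spoiler's transition p -a-> p' to a successor),
against Spoiler's state sequence ps over the letter sequence beta.\<close>
fun dup_play :: "('q \<Rightarrow> ('q \<times> 'a \<times> 'q) \<Rightarrow> 'q) \<Rightarrow> (nat \<Rightarrow> 'q) \<Rightarrow> (nat \<Rightarrow> 'a) \<Rightarrow> 'q \<Rightarrow> nat \<Rightarrow> 'q" where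
  "dup_play \<sigma> ps \<beta> r0 0 = r0"
| "dup_play \<sigma> ps \<beta> r0 (Suc i) = \<sigma> (dup_play \<sigma> ps \<beta> r0 i) (ps i, \<beta> i, ps (Suc i))"

definition dup_strategy :: "'q set \<Rightarrow> 'a set \<Rightarrow> ('q \<Rightarrow> 'a \<Rightarrow> 'q set) \<Rightarrow> ('q \<Rightarrow> ('q \<times> 'a \<times> 'q) \<Rightarrow> 'q) \<Rightarrow> bool" where
  "dup_strategy Q \<Sigma> \<delta> \<sigma> \<longleftrightarrow>
     (\<forall>r\<in>Q. \<forall>p\<in>Q. \<forall>a\<in>\<Sigma>. \<forall>p'\<in>\<delta> p a. \<sigma> r (p, a, p') \<in> \<delta> r a)"

definition delayed_sim ::
  "'q set \<Rightarrow> 'a set \<Rightarrow> ('q \<Rightarrow> 'a \<Rightarrow> 'q set) \<Rightarrow> 'q set \<Rightarrow> 'q \<Rightarrow> 'q \<Rightarrow> bool" where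
  "delayed_sim Q \<Sigma> \<delta> F p r \<longleftrightarrow>
     (\<exists>\<sigma>. dup_strategy Q \<Sigma> \<delta> \<sigma> \<and>
       (\<forall>ps \<beta>. word \<Sigma> \<beta> \<longrightarrow> is_run \<delta> p \<beta> ps \<longrightarrow>
          (\<forall>i. ps i \<in> F \<longrightarrow> (\<exists>k\<ge>i. dup_play \<sigma> ps \<beta> r k \<in> F))))"

definition dag_V :: "('q \<Rightarrow> 'a \<Rightarrow> 'q set) \<Rightarrow> 'q set \<Rightarrow> (nat \<Rightarrow> 'a) \<Rightarrow> ('q \<times> nat) set" where
  "dag_V \<delta> I \<alpha> = {(q, i). \<exists>q0 \<rho>. q0 \<in> I \<and> is_run \<delta> q0 \<alpha> \<rho> \<and> \<rho> i = q}"

definition dag_E :: "('q \<Rightarrow> 'a \<Rightarrow> 'q set) \<Rightarrow> 'q set \<Rightarrow> (nat \<Rightarrow> 'a) \<Rightarrow> (('q \<times> nat) \<times> ('q \<times> nat)) set" where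
  "dag_E \<delta> I \<alpha> = {((q, i), (q', i')). (q, i) \<in> dag_V \<delta> I \<alpha> \<and> (q', i') \<in> dag_V \<delta> I \<alpha> \<and>
                      i' = Suc i \<and> q' \<in> \<delta> q (\<alpha> i)}"

definition reach_in :: "(('q \<times> nat) \<times> ('q \<times> nat)) set \<Rightarrow> ('q \<times> nat) set \<Rightarrow> ('q \<times> nat) \<Rightarrow> ('q \<times> nat) set" where
  "reach_in E S v = {w. (v, w) \<in> (E \<inter> (S \<times> S))\<^sup>*}"

definition finite_vertex :: "(('q \<times> nat) \<times> ('q \<times> nat)) set \<Rightarrow> ('q \<times> nat) set \<Rightarrow> ('q \<times> nat) \<Rightarrow> bool" where
  "finite_vertex E S v \<longleftrightarrow> finite (reach_in E S v)"

definition endangered_vertex :: "(('q \<times> nat) \<times> ('q \<times> nat)) set \<Rightarrow> 'q set \<Rightarrow> ('q \<times> nat) set \<Rightarrow> ('q \<times> nat) \<Rightarrow> bool" where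
  "endangered_vertex E F S v \<longleftrightarrow> \<not> (\<exists>w\<in>reach_in E S v. fst w \<in> F)"

text \<open>The subgraphs G^0, G^1, ... (as vertex sets; edges are induced).  From G^j with j
even, the finite vertices are removed (they get rank j); from G^j with j odd,
the endangered vertices are removed (they get rank j).\<close>
fun dag_G :: "('q \<Rightarrow> 'a \<Rightarrow> 'q set) \<Rightarrow> 'q set \<Rightarrow> 'q set \<Rightarrow> (nat \<Rightarrow> 'a) \<Rightarrow> nat \<Rightarrow> ('q \<times> nat) set" where
  "dag_G \<delta> I F \<alpha> 0 = dag_V \<delta> I \<alpha>"
| "dag_G \<delta> I F \<alpha> (Suc j) =
     (if even j then {v \<in> dag_G \<delta> I F \<alpha> j. \<not> finite_vertex (dag_E \<delta> I \<alpha>) (dag_G \<delta> I F \<alpha> j) v}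
      else {v \<in> dag_G \<delta> I F \<alpha> j. \<not> endangered_vertex (dag_E \<delta> I \<alpha>) F (dag_G \<delta> I F \<alpha> j) v})"

definition rank_of ::
  "'q set \<Rightarrow> ('q \<Rightarrow> 'a \<Rightarrow> 'q set) \<Rightarrow> 'q set \<Rightarrow> 'q set \<Rightarrow> (nat \<Rightarrow> 'a) \<Rightarrow> ('q \<times> nat) \<Rightarrow> enat" where
  "rank_of Q \<delta> I F \<alpha> v =
     (if \<exists>j\<le>2 * card Q. v \<in> dag_G \<delta> I F \<alpha> j \<and> v \<notin> dag_G \<delta> I F \<alpha> (Suc j)
      then enat (LEAST j. v \<in> dag_G \<delta> I F \<alpha> j \<and> v \<notin> dag_G \<delta> I F \<alpha> (Suc j))
      else \<infinity>)"

definition even_ceil :: "enat \<Rightarrow> enat" where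
  "even_ceil x = (case x of enat k \<Rightarrow> enat (if even k then k else Suc k) | \<infinity> \<Rightarrow> \<infinity>)"

end

theory Submission imports Defs begin

locale L =
  fixes Q :: "'q set" and \<Sigma> :: "'a set" and \<delta> :: "'q \<Rightarrow> 'a \<Rightarrow> 'q set"
    and I F :: "'q set" and \<alpha> :: "nat \<Rightarrow> 'a"
  assumes aut: "buchi_automaton Q \<Sigma> \<delta> I F" and wd: "word \<Sigma> \<alpha>"
begin

abbreviation "V \<equiv> dag_V \<delta> I \<alpha>"
abbreviation "E \<equiv> dag_E \<delta> I \<alpha>"
abbreviation "G \<equiv> dag_G \<delta> I F \<alpha>"

lemma delta_Q: "q \<in> Q \<Longrightarrow> q' \<in> \<delta> q (\<alpha> n) \<Longrightarrow> q' \<in> Q"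
  using aut wd unfolding buchi_automaton_def word_def by blast

lemma run_Q: "q0 \<in> Q \<Longrightarrow> is_run \<delta> q0 \<alpha> \<rho> \<Longrightarrow> \<rho> n \<in> Q"
  by (induction n) (auto simp: is_run_def intro: delta_Q)

lemma V_Q: "(q,i) \<in> V \<Longrightarrow> q \<in> Q"
  using aut run_Q unfolding dag_V_def buchi_automaton_def by blast

lemma V_path:
  assumes "(q,i) \<in> V" "\<rho> 0 = q" "\<And>n. \<rho> (Suc n) \<in> \<delta> (\<rho> n) (\<alpha> (i+n))"
  shows "(\<rho> n, i+n) \<in> V"
proof -
  obtain q0 r where r: "q0 \<in> I" "is_run \<delta> q0 \<alpha> r" "r i = q"
    using assms(1) unfolding dag_V_def by blast
  define r' where "r' m = (if m \<le> i then r m else \<rho> (m - i))" for m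
  have "is_run \<delta> q0 \<alpha> r'"
    unfolding is_run_def
  proof (intro conjI allI)
    show "r' 0 = q0" using r unfolding r'_def is_run_def by simp
    fix m
    show "r' (Suc m) \<in> \<delta> (r' m) (\<alpha> m)"
    proof (cases "m < i")
      case True then show ?thesis using r unfolding r'_def is_run_def by auto
    next
      case False
      then obtain d where d: "m = i + d" by (metis le_Suc_ex not_less)
      show ?thesis
      proof (cases d)
        case 0 then show ?thesis using assms(2) assms(3)[of 0] r d unfolding r'_def by auto
      next
        case (Suc d') then show ?thesis using assms(3)[of d] d unfolding r'_def
          by (auto simp: Suc_diff_le)
      qed
    qed
  qed
  moreover have "r' (i+n) = \<rho> n" using r assms(2) unfolding r'_def by auto
  ultimately show ?thesis using r unfolding dag_V_def by blast
qed

lemma G_V: "G j \<subseteq> V"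
  by (induction j) auto

lemma G_Suc: "G (Suc j) \<subseteq> G j"
  by auto

lemma G_anti: "j \<le> j' \<Longrightarrow> G j' \<subseteq> G j"
  by (induction j' rule: dec_induct) (use G_Suc in blast)+

lemma G_even: "even j \<Longrightarrow> v \<in> G (Suc j) \<longleftrightarrow> v \<in> G j \<and> infinite (reach_in E (G j) v)"
  by (simp add: finite_vertex_def)

lemma G_odd: "odd j \<Longrightarrow> v \<in> G (Suc j) \<longleftrightarrow> v \<in> G j \<and> (\<exists>w\<in>reach_in E (G j) v. fst w \<in> F)"
  by (simp add: endangered_vertex_def)

lemma E_iff: "((q,i),(q',i')) \<in> E \<longleftrightarrow> (q,i) \<in> V \<and> (q',i') \<in> V \<and> i' = Suc i \<and> q' \<in> \<delta> q (\<alpha> i)"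
  unfolding dag_E_def by simp

lemma seg_reach:
  assumes "S \<subseteq> V" "\<And>l. l \<le> n \<Longrightarrow> (\<tau> l, i+l) \<in> S"
    "\<And>l. l < n \<Longrightarrow> \<tau> (Suc l) \<in> \<delta> (\<tau> l) (\<alpha> (i+l))"
  shows "((\<tau> 0, i), (\<tau> n, i+n)) \<in> (E \<inter> S \<times> S)\<^sup>*"
  using assms(2,3)
proof (induction n)
  case 0 then show ?case by simp
next
  case (Suc n)
  have "((\<tau> 0, i), (\<tau> n, i+n)) \<in> (E \<inter> S \<times> S)\<^sup>*" using Suc by auto
  moreover have "((\<tau> n, i+n), (\<tau> (Suc n), i + Suc n)) \<in> E \<inter> S \<times> S"
    using Suc.prems[of n] Suc.prems[of "Suc n"] assms(1) by (auto simp: E_iff)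
  ultimately show ?case by (rule rtrancl_into_rtrancl)
qed

lemma path_infinite:
  assumes "S \<subseteq> V" "\<And>k. (\<rho> k, i+k) \<in> S" "\<And>k. \<rho> (Suc k) \<in> \<delta> (\<rho> k) (\<alpha> (i+k))"
  shows "infinite (reach_in E S (\<rho> 0, i))"
proof
  assume fin: "finite (reach_in E S (\<rho> 0, i))"
  have "(\<lambda>k. (\<rho> k, i+k)) ` UNIV \<subseteq> reach_in E S (\<rho> 0, i)"
    using seg_reach[OF assms(1), of _ \<rho> i] assms unfolding reach_in_def by auto
  moreover have "inj (\<lambda>k. (\<rho> k, i+k))" by (auto intro: injI)
  ultimately show False using fin by (meson finite_imageD finite_subset infinite_UNIV_nat)
qed

lemma reach_seg:
  assumes "(v, w) \<in> (E \<inter> S \<times> S)\<^sup>*" "v \<in> S"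
  shows "\<exists>n seg. seg 0 = fst v \<and> w = (seg n, snd v + n) \<and> (\<forall>l\<le>n. (seg l, snd v + l) \<in> S)
     \<and> (\<forall>l<n. seg (Suc l) \<in> \<delta> (seg l) (\<alpha> (snd v + l)))"
  using assms(1)
proof (induction rule: rtrancl_induct)
  case base
  show ?case by (rule exI[of _ 0], rule exI[of _ "\<lambda>_. fst v"]) (use assms(2) in auto)
next
  case (step y z)
  then obtain n seg where s: "seg 0 = fst v" "y = (seg n, snd v + n)" "\<forall>l\<le>n. (seg l, snd v + l) \<in> S"
     "\<forall>l<n. seg (Suc l) \<in> \<delta> (seg l) (\<alpha> (snd v + l))" by blast
  obtain qz iz where z: "z = (qz, iz)" by force
  have e: "iz = Suc (snd v + n)" "qz \<in> \<delta> (seg n) (\<alpha> (snd v + n))" "z \<in> S"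
    using step(2) s(2) z by (auto simp: E_iff)
  define seg' where "seg' l = (if l \<le> n then seg l else qz)" for l
  show ?case
    apply (rule exI[of _ "Suc n"], rule exI[of _ seg'])
    using s e z unfolding seg'_def by (auto simp: le_Suc_eq less_Suc_eq)
qed

lemma finite_Q: "finite Q" using aut unfolding buchi_automaton_def by blast

lemma konig_step:
  assumes "S \<subseteq> V" "v \<in> S" "infinite (reach_in E S v)"
  shows "\<exists>w. (v,w) \<in> E \<and> w \<in> S \<and> infinite (reach_in E S w)"
proof (rule ccontr)
  assume nex: "\<not> ?thesis"
  define N where "N = {w. (v,w) \<in> E \<and> w \<in> S}"
  have "N \<subseteq> Q \<times> {Suc (snd v)}"
    unfolding N_def dag_E_def using V_Q by auto
  then have fN: "finite N" using finite_Q by (meson finite_SigmaI finite_subset finite.emptyI finite_insert)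
  have "reach_in E S v \<subseteq> insert v (\<Union>w\<in>N. reach_in E S w)"
  proof
    fix x assume "x \<in> reach_in E S v"
    then have "(v,x) \<in> (E \<inter> S \<times> S)\<^sup>*" unfolding reach_in_def by simp
    then show "x \<in> insert v (\<Union>w\<in>N. reach_in E S w)"
    proof (cases rule: converse_rtranclE)
      case base then show ?thesis by simp
    next
      case (step w)
      then have "w \<in> N" "x \<in> reach_in E S w" unfolding N_def reach_in_def by auto
      then show ?thesis by blast
    qed
  qed
  moreover have "finite (\<Union>w\<in>N. reach_in E S w)" using fN nex unfolding N_def by auto
  ultimately show False using assms(3) by (meson finite_insert finite_subset)
qed

lemma konig:
  assumes "S \<subseteq> V" "v \<in> S" "infinite (reach_in E S v)"
  shows "\<exists>\<rho>. \<rho> 0 = fst v \<and> (\<forall>k. (\<rho> k, snd v + k) \<in> S \<and> \<rho> (Suc k) \<in> \<delta> (\<rho> k) (\<alpha> (snd v + k)))"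
proof -
  define P where "P w \<longleftrightarrow> w \<in> S \<and> infinite (reach_in E S w)" for w
  define nx where "nx w = (SOME w'. (w,w') \<in> E \<and> P w')" for w
  have nx: "P w \<Longrightarrow> (w, nx w) \<in> E \<and> P (nx w)" for w
    unfolding nx_def by (rule someI_ex) (use konig_step[OF assms(1)] in \<open>auto simp: P_def\<close>)
  define vs where "vs n = (nx ^^ n) v" for n
  have vsS: "vs (Suc n) = nx (vs n)" for n unfolding vs_def by simp
  have Pv: "P (vs n)" for n
  proof (induction n)
    case 0 then show ?case using assms by (simp add: vs_def P_def)
  next
    case (Suc n) then show ?case using nx vsS by simp
  qed
  have ev: "(vs n, vs (Suc n)) \<in> E" for n using nx[OF Pv[of n]] vsS by simp
  have sn: "snd (vs n) = snd v + n" for n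
  proof (induction n)
    case 0 then show ?case by (simp add: vs_def)
  next
    case (Suc n) then show ?case using ev[of n] unfolding dag_E_def by auto
  qed
  have vsn: "vs n = (fst (vs n), snd v + n)" for n using sn[of n] by (metis prod.collapse)
  show ?thesis
  proof (rule exI[of _ "\<lambda>k. fst (vs k)"], intro conjI allI)
    show "fst (vs 0) = fst v" by (simp add: vs_def)
    fix k
    show "(fst (vs k), snd v + k) \<in> S" using Pv[of k] vsn[of k] unfolding P_def by simp
    show "fst (vs (Suc k)) \<in> \<delta> (fst (vs k)) (\<alpha> (snd v + k))"
      using ev[of k] vsn[of k] vsn[of "Suc k"] E_iff by (metis add_Suc_right)
  qed
qed


end

locale L2 = L Q \<Sigma> \<delta> I F \<alpha> for Q :: "'q set" and \<Sigma> :: "'a set" and \<delta> I F \<alpha> +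
  fixes p q :: 'q and \<sigma> :: "'q \<Rightarrow> ('q \<times> 'a \<times> 'q) \<Rightarrow> 'q" and i :: nat
  assumes strat: "dup_strategy Q \<Sigma> \<delta> \<sigma>"
    and win: "\<forall>ps \<beta>. word \<Sigma> \<beta> \<longrightarrow> is_run \<delta> p \<beta> ps \<longrightarrow>
          (\<forall>i. ps i \<in> F \<longrightarrow> (\<exists>k\<ge>i. dup_play \<sigma> ps \<beta> q k \<in> F))"
    and pQ: "p \<in> Q" and qV: "(q,i) \<in> V"
begin

definition spath :: "('q \<times> nat) set \<Rightarrow> (nat \<Rightarrow> 'q) \<Rightarrow> bool" where
  "spath S \<rho> \<longleftrightarrow> \<rho> 0 = p \<and> (\<forall>k. (\<rho> k, i+k) \<in> S \<and> \<rho> (Suc k) \<in> \<delta> (\<rho> k) (\<alpha> (i+k)))"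

abbreviation tau :: "(nat \<Rightarrow> 'q) \<Rightarrow> nat \<Rightarrow> 'q" where
  "tau \<rho> \<equiv> dup_play \<sigma> \<rho> (\<lambda>k. \<alpha> (i+k)) q"

lemma spath_mono: "spath S \<rho> \<Longrightarrow> S \<subseteq> S' \<Longrightarrow> spath S' \<rho>"
  unfolding spath_def by blast

lemma tau_step:
  assumes "spath V \<rho>"
  shows "tau \<rho> k \<in> Q \<and> tau \<rho> (Suc k) \<in> \<delta> (tau \<rho> k) (\<alpha> (i+k))"
proof (induction k)
  have qQ: "q \<in> Q" using qV V_Q by blast
  {
    fix k assume tk: "tau \<rho> k \<in> Q"
    have "\<rho> k \<in> Q" using assms V_Q unfolding spath_def by blast
    moreover have "\<alpha> (i+k) \<in> \<Sigma>" using wd unfolding word_def by blast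
    moreover have "\<rho> (Suc k) \<in> \<delta> (\<rho> k) (\<alpha> (i+k))" using assms unfolding spath_def by blast
    ultimately have "tau \<rho> (Suc k) \<in> \<delta> (tau \<rho> k) (\<alpha> (i+k))"
      using strat tk unfolding dup_strategy_def by simp
  } note st = this
  case 0 show ?case using qQ st[of 0] by simp
next
  case (Suc k)
  have "\<rho> (Suc k) \<in> Q" using assms V_Q unfolding spath_def by blast
  moreover have "\<alpha> (i+Suc k) \<in> \<Sigma>" using wd unfolding word_def by blast
  moreover have "\<rho> (Suc (Suc k)) \<in> \<delta> (\<rho> (Suc k)) (\<alpha> (i+Suc k))" using assms unfolding spath_def by blast
  moreover have "tau \<rho> (Suc k) \<in> Q" using Suc delta_Q by blast
  ultimately show ?case using strat unfolding dup_strategy_def by simp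
qed

lemma tau_V: "spath V \<rho> \<Longrightarrow> (tau \<rho> k, i+k) \<in> V"
  using V_path[OF qV, of "tau \<rho>" k] tau_step by simp

lemma tau_win:
  assumes "spath V \<rho>" "\<rho> k \<in> F" shows "\<exists>k'\<ge>k. tau \<rho> k' \<in> F"
proof -
  have "word \<Sigma> (\<lambda>k. \<alpha> (i+k))" using wd unfolding word_def by simp
  moreover have "is_run \<delta> p (\<lambda>k. \<alpha> (i+k)) \<rho>" using assms(1) unfolding spath_def is_run_def by simp
  ultimately show ?thesis using win assms(2) by blast
qed

lemma tau_prefix: "(\<And>l. l \<le> K \<Longrightarrow> \<rho> l = \<rho>' l) \<Longrightarrow> l \<le> K \<Longrightarrow> tau \<rho> l = tau \<rho>' l"
  by (induction l) auto

lemma tau_S1: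
  assumes "spath (G (2*j)) \<rho>" "\<And>k. (tau \<rho> k, i+k) \<in> G (2*j)"
  shows "(tau \<rho> k, i+k) \<in> G (Suc (2*j))"
proof -
  have sV: "spath V \<rho>" using assms(1) G_V spath_mono by blast
  have "infinite (reach_in E (G (2*j)) ((\<lambda>n. tau \<rho> (k+n)) 0, i+k))"
    apply (rule path_infinite[OF G_V])
    using assms(2) tau_step[OF sV] by (simp_all add: add.assoc)
  then show ?thesis using assms(2)[of k] G_even[of "2*j"] by simp
qed


lemma main:
  "spath (G (2*j)) \<rho> \<Longrightarrow> (tau \<rho> k, i+k) \<in> G (2*j)"
proof (induction j arbitrary: \<rho> k)
  case 0
  then have "spath V \<rho>" by simp
  then show ?case using tau_V by simp
next
  case (Suc j)
  let ?S0 = "G (2*j)" and ?S1 = "G (Suc (2*j))" and ?S2 = "G (Suc (Suc (2*j)))"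
  have eq: "2 * Suc j = Suc (Suc (2*j))" by simp
  have sp2: "spath ?S2 \<rho>" using Suc.prems eq by simp
  have sp0: "spath ?S0 \<rho>" using sp2 G_anti[of "2*j" "Suc (Suc (2*j))"] spath_mono by auto
  have in1: "(tau \<rho>' m, i+m) \<in> ?S1" if "spath ?S0 \<rho>'" for \<rho>' m
    using tau_S1[OF that Suc.IH[OF that]] .
  have rk2: "(\<rho> k, i+k) \<in> ?S2" using sp2 unfolding spath_def by blast
  then have rk1: "(\<rho> k, i+k) \<in> ?S1" and "\<exists>w\<in>reach_in E ?S1 (\<rho> k, i+k). fst w \<in> F"
    using G_odd[of "Suc (2*j)" "(\<rho> k, i+k)"] by auto
  then obtain w where w: "(( \<rho> k, i+k), w) \<in> (E \<inter> ?S1 \<times> ?S1)\<^sup>*" "fst w \<in> F"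
    unfolding reach_in_def by auto
  obtain n seg where sg: "seg 0 = \<rho> k" "w = (seg n, i+k+n)" "\<forall>l\<le>n. (seg l, i+k+l) \<in> ?S1"
     "\<forall>l<n. seg (Suc l) \<in> \<delta> (seg l) (\<alpha> (i+k+l))"
    using reach_seg[OF w(1) rk1] by auto
  have "w \<in> ?S0" "infinite (reach_in E ?S0 w)" using sg(2,3) G_even[of "2*j" w] by auto
  then obtain \<rho>w where rw: "\<rho>w 0 = seg n" "\<And>m. (\<rho>w m, i+k+n+m) \<in> ?S0"
    "\<And>m. \<rho>w (Suc m) \<in> \<delta> (\<rho>w m) (\<alpha> (i+k+n+m))"
    using konig[OF G_V[of "2*j"], of w] sg(2) by auto
  define \<rho>' where "\<rho>' m = (if m \<le> k then \<rho> m else if m \<le> k+n then seg (m-k) else \<rho>w (m-k-n))" for m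
  have S10: "?S1 \<subseteq> ?S0" by (rule G_Suc)
  have sp': "spath ?S0 \<rho>'"
    unfolding spath_def
  proof (intro conjI allI)
    show "\<rho>' 0 = p" using sp0 unfolding \<rho>'_def spath_def by simp
    fix m
    show "(\<rho>' m, i+m) \<in> ?S0"
    proof -
      consider "m \<le> k" | "k < m" "m \<le> k+n" | "k+n < m" by linarith
      then show ?thesis
      proof cases
        case 1 then show ?thesis using sp0 unfolding \<rho>'_def spath_def by simp
      next
        case 2 then show ?thesis using sg(3) S10 spec[OF sg(3), of "m-k"] unfolding \<rho>'_def by auto
      next
        case 3 then show ?thesis using rw(2)[of "m-k-n"] unfolding \<rho>'_def by simp
      qed
    qed
    show "\<rho>' (Suc m) \<in> \<delta> (\<rho>' m) (\<alpha> (i+m))"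
    proof -
      consider "m < k" | "k \<le> m" "m < k+n" | "k+n \<le> m" by linarith
      then show ?thesis
      proof cases
        case 1 then show ?thesis using sp0 unfolding \<rho>'_def spath_def by simp
      next
        case 2
        then have "\<rho>' m = seg (m-k)" "\<rho>' (Suc m) = seg (Suc (m-k))" "m-k < n"
          using sg(1) unfolding \<rho>'_def by (auto simp: Suc_diff_le)
        moreover have "i + k + (m-k) = i + m" using 2 by simp
        ultimately show ?thesis using sg(4) by (metis)
      next
        case 3
        then have "\<rho>' m = \<rho>w (m-k-n)" "\<rho>' (Suc m) = \<rho>w (Suc (m-k-n))"
          using sg(1) rw(1) unfolding \<rho>'_def by (auto simp: Suc_diff_le)
        then show ?thesis using rw(3)[of "m-k-n"] 3 by simp
      qed
    qed
  qed
  have spV: "spath V \<rho>'" using sp' G_V spath_mono by blast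
  have "\<rho>' (k+n) \<in> F" using w(2) sg(1,2) unfolding \<rho>'_def by auto
  then obtain k2 where k2: "k2 \<ge> k+n" "tau \<rho>' k2 \<in> F" using tau_win[OF spV] by blast
  have "(((\<lambda>l. tau \<rho>' (k+l)) 0, i+k), ((\<lambda>l. tau \<rho>' (k+l)) (k2-k), i+k+(k2-k))) \<in> (E \<inter> ?S1 \<times> ?S1)\<^sup>*"
    apply (rule seg_reach[OF G_V])
    using in1[OF sp'] tau_step[OF spV] by (simp_all add: add.assoc)
  then have "((tau \<rho>' k, i+k), (tau \<rho>' k2, i+k2)) \<in> (E \<inter> ?S1 \<times> ?S1)\<^sup>*" using k2(1) by simp
  moreover have "tau \<rho>' k = tau \<rho> k"
    by (rule tau_prefix[of k, symmetric]) (auto simp: \<rho>'_def)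
  ultimately have "\<exists>w\<in>reach_in E ?S1 (tau \<rho> k, i+k). fst w \<in> F"
    using k2(2) unfolding reach_in_def by force
  moreover have "(tau \<rho> k, i+k) \<in> ?S1" using in1[OF sp0] .
  ultimately show ?case using G_odd[of "Suc (2*j)"] eq by simp
qed

end

declare dag_G.simps(2)[simp del]

lemma (in L) drop_ex: "v \<in> G 0 \<Longrightarrow> v \<notin> G N \<Longrightarrow> \<exists>j<N. v \<in> G j \<and> v \<notin> G (Suc j)"
proof (induction N)
  case 0 then show ?case by simp
next
  case (Suc N) then show ?case by (cases "v \<in> G N") (auto intro: less_SucI)
qed

theorem lemma6:
  fixes Q :: "'q set" and \<Sigma> :: "'a set" and \<delta> :: "'q \<Rightarrow> 'a \<Rightarrow> 'q set"
    and I F :: "'q set" and p q :: 'q and \<alpha> :: "nat \<Rightarrow> 'a" and i :: nat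
  assumes "buchi_automaton Q \<Sigma> \<delta> I F"
    and "complete_aut Q \<Sigma> \<delta>"
    and "p \<in> Q" and "q \<in> Q"
    and "delayed_sim Q \<Sigma> \<delta> F p q"
    and "word \<Sigma> \<alpha>"
    and "(p, i) \<in> dag_V \<delta> I \<alpha>" and "(q, i) \<in> dag_V \<delta> I \<alpha>"
  shows "rank_of Q \<delta> I F \<alpha> (p, i) \<le> even_ceil (rank_of Q \<delta> I F \<alpha> (q, i))"
proof -
  interpret L Q \<Sigma> \<delta> I F \<alpha> using assms(1,6) by unfold_locales
  obtain \<sigma> where strat: "dup_strategy Q \<Sigma> \<delta> \<sigma>" and win: "\<forall>ps \<beta>. word \<Sigma> \<beta> \<longrightarrow> is_run \<delta> p \<beta> ps \<longrightarrow>
          (\<forall>i. ps i \<in> F \<longrightarrow> (\<exists>k\<ge>i. dup_play \<sigma> ps \<beta> q k \<in> F))"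
    using assms(5) unfolding delayed_sim_def by blast
  interpret L2 Q \<Sigma> \<delta> I F \<alpha> p q \<sigma> i using strat win assms(3,8) by unfold_locales
  have key: "(q,i) \<in> G (Suc (2*m))" if h: "(p,i) \<in> G (Suc (2*m))" for m
  proof -
    have "(p,i) \<in> G (2*m)" "infinite (reach_in E (G (2*m)) (p,i))" using h G_even[of "2*m"] by auto
    then obtain \<rho> where r: "\<rho> 0 = p" "\<forall>k. (\<rho> k, i + k) \<in> G (2*m) \<and> \<rho> (Suc k) \<in> \<delta> (\<rho> k) (\<alpha> (i + k))"
      using konig[OF G_V[of "2*m"], of "(p,i)"] by auto
    then have sp: "spath (G (2*m)) \<rho>" unfolding spath_def by simp
    show ?thesis using tau_S1[OF sp main[OF sp], of 0] by simp
  qed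
  show ?thesis
  proof (cases "rank_of Q \<delta> I F \<alpha> (q, i)")
    case infinity then show ?thesis by (simp add: even_ceil_def)
  next
    case (enat k)
    let ?P = "\<lambda>j. (q,i) \<in> G j \<and> (q,i) \<notin> G (Suc j)"
    have ex: "\<exists>j\<le>2 * card Q. ?P j"
    proof (rule ccontr)
      assume "\<not> (\<exists>j\<le>2 * card Q. ?P j)"
      then have "rank_of Q \<delta> I F \<alpha> (q, i) = \<infinity>" unfolding rank_of_def by (rule if_not_P)
      then show False using enat by simp
    qed
    have "rank_of Q \<delta> I F \<alpha> (q, i) = enat (LEAST j. ?P j)" unfolding rank_of_def by (rule if_P[OF ex])
    then have kdef: "k = (LEAST j. ?P j)" using enat by simp
    obtain j0 where j0: "j0 \<le> 2 * card Q" "?P j0" using ex by blast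
    have Pk: "?P k" unfolding kdef by (rule LeastI) (rule j0(2))
    have "k \<le> j0" unfolding kdef by (rule Least_le) (rule j0(2))
    then have kle: "k \<le> 2 * card Q" using j0(1) by simp
    define c where "c = (if even k then k else Suc k)"
    have cle: "c \<le> 2 * card Q" 
    proof (cases "even k")
      case False
      then have "k \<noteq> 2 * card Q" by auto
      then show ?thesis using kle False unfolding c_def by simp
    qed (use kle c_def in simp)
    have ce: "c = 2 * (c div 2)" unfolding c_def by auto
    have "k \<le> c" unfolding c_def by simp
    then have "G (Suc c) \<subseteq> G (Suc k)" using G_anti[of "Suc k" "Suc c"] by simp
    then have "(q,i) \<notin> G (Suc c)" using Pk by blast
    then have "(p,i) \<notin> G (Suc c)"
    proof (rule contrapos_nn)
      assume "(p,i) \<in> G (Suc c)"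
      then have "(p,i) \<in> G (Suc (2 * (c div 2)))" by (simp only: ce[symmetric])
      then have "(q,i) \<in> G (Suc (2 * (c div 2)))" by (rule key)
      then show "(q,i) \<in> G (Suc c)" by (simp only: ce[symmetric])
    qed
    moreover have "(p,i) \<in> G 0" using assms(7) by simp
    ultimately obtain j where j: "j < Suc c" "(p,i) \<in> G j" "(p,i) \<notin> G (Suc j)"
      using drop_ex by blast
    have jle: "j \<le> 2 * card Q" using j(1) cle by simp
    have "rank_of Q \<delta> I F \<alpha> (p, i) = enat (LEAST j. (p,i) \<in> G j \<and> (p,i) \<notin> G (Suc j))"
      unfolding rank_of_def
      by (rule if_P) (use j jle in blast)
    also have "\<dots> \<le> enat j" using Least_le[of "\<lambda>j. (p,i) \<in> G j \<and> (p,i) \<notin> G (Suc j)" j] j by simp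
    also have "\<dots> \<le> enat c" using j by simp
    also have "enat c = even_ceil (rank_of Q \<delta> I F \<alpha> (q, i))"
      using enat unfolding even_ceil_def c_def by simp
    finally show ?thesis .
  qed
qed

end
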